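(* Let $V>0$, $C_0>0$, $A>0$, $0<\delta<1$ with $\delta\neq\frac14$, and $\epsilon$ with $\frac{4\delta}{3\delta+1}\le\epsilon<1$. Let $R\ge2$, and let $E,y:[R,\infty)\to\mathbb R$ be functions with the following properties: 1. $E-y$ is continuous and piecewise differentiable, with $\frac{d(E-y)}{dr}=\frac{y}{r}$ wherever it is differentiable; 2. $|y(r)|\le C_0r^{-1/3}|E(r)|^{4/3}$ for all $r\ge R$; 3. $|E(r)-RV|\le A(r^\delta+R^\epsilon)$ for all $r\ge R$. Then there is a constant $A'$ depending only on $V,C_0,A,\delta,\epsilon$ (not on $R$, $E$, $y$) such that $$|E(r)-RV|\le A'\left(r^{\frac43\delta-\frac13}+R^\epsilon\right)\qquad\text{for all } r\ge R.$$
   Context: In the paper this is applied with $R=r_k$, $V=\mathrm{Vol}(Y)$, $E=\hat E$ the energy of the min-max generator, and $y=y_2=(\hat{cs}+2\hat e_\mu)/r$. *)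

theory Defs
  imports "HOL-Analysis.Analysis"
begin

end

theory Submission
  imports Defs "HOL-Analysis.Analysis"
begin


lemma cmp:
  fixes f g f' g' :: "real \<Rightarrow> real"
  assumes "a \<le> b" "finite S" "continuous_on {a..b} f"
    "\<forall>x\<in>{a<..<b}-S. (f has_real_derivative f' x) (at x)"
    "\<forall>x\<in>{a<..<b}. (g has_real_derivative g' x) (at x)" "continuous_on {a..b} g"
    "\<forall>x\<in>{a..b}. f' x \<le> g' x"
  shows "f b - f a \<le> g b - g a"
proof -
  have 1: "(f' has_integral (f b - f a)) {a..b}"
    apply (rule fundamental_theorem_of_calculus_interior_strong[OF assms(2,1) _ assms(3)])
    using assms(4) has_real_derivative_iff_has_vector_derivative by blast
  have 2: "(g' has_integral (g b - g a)) {a..b}"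
    apply (rule fundamental_theorem_of_calculus_interior_strong[of "{}", OF _ assms(1) _ assms(6)])
    using assms(5) has_real_derivative_iff_has_vector_derivative by auto
  show ?thesis using has_integral_le[OF 1 2] assms(7) by auto
qed

lemma ybound:
  fixes V C0 A \<delta> \<epsilon> R t e y :: real
  assumes "V>0" "C0>0" "A>0" "\<delta>>0" "\<epsilon><1" "R\<ge>2" "t\<ge>R"
    "\<bar>y\<bar> \<le> C0 * t powr (-1/3) * \<bar>e\<bar> powr (4/3)"
    "\<bar>e - R*V\<bar> \<le> A*(t powr \<delta> + R powr \<epsilon>)"
  shows "\<bar>y\<bar> \<le> C0 * (2*(V+A)) powr (4/3) * (R powr (4/3) * t powr (-1/3) + t powr (4/3*\<delta> - 1/3))"
proof -
  have Rp: "R powr \<epsilon> \<le> R" using powr_mono[of \<epsilon> 1 R] assms by auto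
  have e1: "\<bar>e\<bar> \<le> (V+A)*R + A * t powr \<delta>"
  proof -
    have a: "A * R powr \<epsilon> \<le> A * R" using Rp assms by (intro mult_left_mono) auto
    have "R*V > 0" using assms by auto
    hence "\<bar>e\<bar> \<le> R*V + (A * t powr \<delta> + A * R powr \<epsilon>)" using assms(9)
      by (simp add: distrib_left)
    thus ?thesis using a by (simp add: algebra_simps)
  qed
  define m where "m = max R (t powr \<delta>)"
  have m1: "(V+A)*R \<le> (V+A)*m" unfolding m_def using assms by (intro mult_left_mono) auto
  have m2: "A * t powr \<delta> \<le> (V+A)*m" unfolding m_def using assms
    by (intro mult_mono) auto
  have "\<bar>e\<bar> \<le> 2*(V+A)*m" using e1 m1 m2 by linarith
  hence "\<bar>e\<bar> powr (4/3) \<le> (2*(V+A)*m) powr (4/3)" by (intro powr_mono2) auto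
  also have "\<dots> = (2*(V+A)) powr (4/3) * m powr (4/3)"
    using assms unfolding m_def by (subst powr_mult) auto
  also have "m powr (4/3) \<le> R powr (4/3) + t powr (4/3*\<delta>)"
    unfolding m_def using powr_powr[of t \<delta> "4/3"] assms
    by (cases "R \<le> t powr \<delta>") (auto simp: max_def mult.commute)
  hence "(2*(V+A)) powr (4/3) * m powr (4/3) \<le> (2*(V+A)) powr (4/3) * (R powr (4/3) + t powr (4/3*\<delta>))"
    by (intro mult_left_mono) auto
  finally have E: "\<bar>e\<bar> powr (4/3) \<le> (2*(V+A)) powr (4/3) * (R powr (4/3) + t powr (4/3*\<delta>))" .
  have tt: "t powr (-1/3) * t powr (4/3*\<delta>) = t powr (4/3*\<delta> - 1/3)"
    using assms by (simp add: powr_add[symmetric])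
  have "\<bar>y\<bar> \<le> C0 * t powr (-1/3) * ((2*(V+A)) powr (4/3) * (R powr (4/3) + t powr (4/3*\<delta>)))"
    using assms(8) E assms(2) by (meson order_trans mult_left_mono powr_ge_zero zero_le_mult_iff less_imp_le)
  also have "\<dots> = C0 * (2*(V+A)) powr (4/3) * (R powr (4/3) * t powr (-1/3) + t powr (-1/3) * t powr (4/3*\<delta>))"
    by (simp add: algebra_simps)
  finally show ?thesis using tt by simp
qed


lemma finalarith:
  fixes A K Q X Y z D :: real
  assumes "A\<ge>0" "K\<ge>0" "Q\<ge>0" "X\<ge>0" "Y\<ge>0"
    "z \<le> D + 2*A*Y + 2*K*Y + K*(Y+X)" "D \<le> K*(3*Y) + Q*X + Q*Y"
  shows "z \<le> (2*A+7*K+Q)*(X+Y)"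
proof -
  have h: "0 \<le> A*X" "0 \<le> K*X" "0 \<le> K*Y" using assms by auto
  have e1: "(2*A+7*K+Q)*(X+Y) = 2*(A*X) + 2*(A*Y)+7*(K*X)+7*(K*Y)+Q*X+Q*Y" by (simp add: algebra_simps)
  have e2: "K*(Y+X) = K*Y + K*X" "K*(3*Y) = 3*(K*Y)" "2*A*Y = 2*(A*Y)" "2*K*Y = 2*(K*Y)" by (simp_all add: algebra_simps)
  show ?thesis using assms(6,7) h unfolding e1 e2 by linarith
qed

theorem mainTheorem11:
  fixes V C\<^sub>0 A \<delta> \<epsilon> :: real
  assumes "V > 0" and "C\<^sub>0 > 0" and "A > 0"
    and "0 < \<delta>" and "\<delta> < 1" and "\<delta> \<noteq> 1/4"
    and "4 * \<delta> / (3 * \<delta> + 1) \<le> \<epsilon>" and "\<epsilon> < 1"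
  shows "\<exists>A'::real. \<forall>(R::real) (E::real \<Rightarrow> real) (y::real \<Rightarrow> real).
     R \<ge> 2
     \<and> continuous_on {R..} (\<lambda>r. E r - y r)
     \<and> (\<forall>b. (\<lambda>r. E r - y r) piecewise_differentiable_on {R..b})
     \<and> (\<forall>r>R. (\<lambda>s. E s - y s) differentiable (at r) \<longrightarrow>
            ((\<lambda>s. E s - y s) has_real_derivative (y r / r)) (at r))
     \<and> (\<forall>r\<ge>R. \<bar>y r\<bar> \<le> C\<^sub>0 * r powr (-1/3) * \<bar>E r\<bar> powr (4/3))
     \<and> (\<forall>r\<ge>R. \<bar>E r - R * V\<bar> \<le> A * (r powr \<delta> + R powr \<epsilon>))
     \<longrightarrow> (\<forall>r\<ge>R. \<bar>E r - R * V\<bar> \<le> A' * (r powr (4/3 * \<delta> - 1/3) + R powr \<epsilon>))"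
proof -
  define p where "p = 4/3*\<delta> - 1/3"
  define K where "K = C\<^sub>0 * (2*(V+A)) powr (4/3)"
  define Q where "Q = K / \<bar>p\<bar>"
  have Kpos: "K > 0" unfolding K_def using assms by auto
  have pnz: "p \<noteq> 0" unfolding p_def using assms(6) by auto
  have Qpos: "Q \<ge> 0" unfolding Q_def using Kpos by auto
  have pd: "p \<le> \<delta>" unfolding p_def using assms by auto
  have dle: "\<delta> \<le> 4*\<delta>/(3*\<delta>+1)" using assms by (simp add: field_simps)
  show ?thesis
  proof (rule exI[of _ "2*A+7*K+Q"], intro allI, rule impI, elim conjE)
    fix R :: real and E y :: "real \<Rightarrow> real"
    assume R2: "R \<ge> 2" and cont: "continuous_on {R..} (\<lambda>r. E r - y r)"
      and pw: "\<forall>b. (\<lambda>r. E r - y r) piecewise_differentiable_on {R..b}"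
      and der: "\<forall>r>R. (\<lambda>s. E s - y s) differentiable (at r) \<longrightarrow>
            ((\<lambda>s. E s - y s) has_real_derivative (y r / r)) (at r)"
      and yb: "\<forall>r\<ge>R. \<bar>y r\<bar> \<le> C\<^sub>0 * r powr (-1/3) * \<bar>E r\<bar> powr (4/3)"
      and eb: "\<forall>r\<ge>R. \<bar>E r - R * V\<bar> \<le> A * (r powr \<delta> + R powr \<epsilon>)"
    have yb': "\<bar>y t\<bar> \<le> K * (R powr (4/3) * t powr (-1/3) + t powr p)" if "t \<ge> R" for t
      unfolding K_def p_def
      by (rule ybound[of V C\<^sub>0 A \<delta> \<epsilon> R t]) (use assms R2 that yb eb in auto)
    define T where "T = R powr (4/(3*\<delta>+1))"
    have "1 \<le> 4/(3*\<delta>+1)" using assms by (simp add: field_simps)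
    hence TR: "R \<le> T" unfolding T_def using powr_mono[of 1 "4/(3*\<delta>+1)" R] R2 by auto
    have Tpos: "T > 0" using TR R2 by auto
    have Td: "T powr \<delta> \<le> R powr \<epsilon>"
    proof -
      have "T powr \<delta> = R powr (4/(3*\<delta>+1) * \<delta>)" unfolding T_def by (simp add: powr_powr)
      also have "\<dots> = R powr (4*\<delta>/(3*\<delta>+1))" by simp
      also have "\<dots> \<le> R powr \<epsilon>" using assms R2 by (intro powr_mono) auto
      finally show ?thesis .
    qed
    have TR43: "R powr (4/3) * T powr (-1/3) = T powr \<delta>"
    proof -
      have "R powr (4/3) * T powr (-1/3) = R powr (4/3) * R powr (4/(3*\<delta>+1) * (-1/3))"
        unfolding T_def by (simp add: powr_powr)
      also have "\<dots> = R powr (4/3 + 4/(3*\<delta>+1) * (-1/3))" by (rule powr_add[symmetric])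
      also have "4/3 + 4/(3*\<delta>+1) * (-1/3) = 4/(3*\<delta>+1) * \<delta>" using assms by (simp add: field_simps)
      also have "R powr (4/(3*\<delta>+1) * \<delta>) = T powr \<delta>" unfolding T_def by (simp add: powr_powr)
      finally show ?thesis .
    qed
    have Tp: "T powr p \<le> R powr \<epsilon>"
    proof -
      have "T powr p \<le> T powr \<delta>" using TR R2 by (intro powr_mono[OF pd]) auto
      thus ?thesis using Td by linarith
    qed
    show "\<forall>r\<ge>R. \<bar>E r - R * V\<bar> \<le> (2*A+7*K+Q) * (r powr (4/3 * \<delta> - 1/3) + R powr \<epsilon>)"
    proof (intro allI impI)
      fix r assume rR: "r \<ge> R"
      have X0: "0 \<le> r powr p" and Y0: "0 \<le> R powr \<epsilon>" by auto
      show "\<bar>E r - R * V\<bar> \<le> (2*A+7*K+Q) * (r powr (4/3 * \<delta> - 1/3) + R powr \<epsilon>)"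
      proof (cases "r \<le> T")
        case True
        have "r powr \<delta> \<le> T powr \<delta>" using True rR R2 assms by (intro powr_mono2) auto
        hence "\<bar>E r - R * V\<bar> \<le> A * (2 * R powr \<epsilon>)" using eb rR Td assms(3)
          by (smt (verit) mult_left_mono)
        moreover have "0 \<le> K*(R powr \<epsilon> + r powr p)" "0 \<le> 2*K*R powr \<epsilon>" using Kpos by auto
        ultimately have z: "\<bar>E r - R * V\<bar> \<le> 0 + 2*A*R powr \<epsilon> + 2*K*R powr \<epsilon> + K*(R powr \<epsilon> + r powr p)"
          by linarith
        have D0: "(0::real) \<le> K*(3*R powr \<epsilon>) + Q * r powr p + Q * R powr \<epsilon>" using Kpos Qpos by auto
        have "\<bar>E r - R * V\<bar> \<le> (2*A+7*K+Q) * (r powr p + R powr \<epsilon>)"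
          using finalarith[OF _ _ Qpos X0 Y0 z D0] assms Kpos by auto
        thus ?thesis unfolding p_def by simp
      next
        case False
        hence rT: "T \<le> r" by auto
        have small: "R powr (4/3) * t powr (-1/3) \<le> R powr \<epsilon>" if "T \<le> t" for t
        proof -
          have "t powr (-1/3) \<le> T powr (-1/3)" using that Tpos by (intro powr_mono2') auto
          hence "R powr (4/3) * t powr (-1/3) \<le> R powr (4/3) * T powr (-1/3)"
            by (intro mult_left_mono) auto
          thus ?thesis using TR43 Td by linarith
        qed
        have yT: "\<bar>y T\<bar> \<le> K * (2 * R powr \<epsilon>)"
        proof -
          have "\<bar>y T\<bar> \<le> K * (R powr (4/3) * T powr (-1/3) + T powr p)" using yb' TR by auto
          also have "\<dots> \<le> K * (2 * R powr \<epsilon>)" using small[of T] Tp Kpos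
            by (intro mult_left_mono) auto
          finally show ?thesis .
        qed
        have yr: "\<bar>y r\<bar> \<le> K * (R powr \<epsilon> + r powr p)"
        proof -
          have "\<bar>y r\<bar> \<le> K * (R powr (4/3) * r powr (-1/3) + r powr p)" using yb' rR by auto
          also have "\<dots> \<le> K * (R powr \<epsilon> + r powr p)" using small[OF rT] Kpos
            by (intro mult_left_mono) auto
          finally show ?thesis .
        qed
        have eT: "\<bar>E T - R * V\<bar> \<le> A * (2 * R powr \<epsilon>)" using eb TR Td assms(3)
          by (smt (verit) mult_left_mono)
        define F where "F = (\<lambda>s. E s - y s)"
        define \<Phi> where "\<Phi> = (\<lambda>s. K * (-3 * R powr (4/3) * s powr (-1/3) + s powr p / p))"
        define \<phi> where "\<phi> = (\<lambda>s. K * (R powr (4/3) * s powr (-4/3) + s powr (p-1)))"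
        obtain S where S: "finite S" "\<forall>x\<in>{R..r} - S. F differentiable (at x within {R..r})"
          using pw unfolding piecewise_differentiable_on_def F_def by blast
        have Fder: "\<forall>x\<in>{T<..<r} - S. (F has_real_derivative y x / x) (at x)"
        proof
          fix x assume x: "x \<in> {T<..<r} - S"
          hence "R < x" "x < r" using TR by auto
          hence "F differentiable (at x within {R..r})" using S x by auto
          hence "F differentiable (at x)" using at_within_Icc_at[of R x r] \<open>R < x\<close> \<open>x < r\<close> by simp
          thus "(F has_real_derivative y x / x) (at x)" using der \<open>R < x\<close> unfolding F_def by auto
        qed
        have Fcont: "continuous_on {T..r} F"
          unfolding F_def by (rule continuous_on_subset[OF cont]) (use TR in auto)
        have Phider: "\<forall>x\<in>{T<..<r}. (\<Phi> has_real_derivative \<phi> x) (at x)"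
        proof
          fix x assume "x \<in> {T<..<r}"
          hence x0: "x > 0" using Tpos by auto
          have "(\<Phi> has_real_derivative K * (-3 * R powr (4/3) * ((-1/3) * x powr (-1/3 - 1)) + (p * x powr (p - 1)) / p)) (at x)"
            unfolding \<Phi>_def
            by (intro DERIV_cmult DERIV_add DERIV_cdivide has_real_derivative_powr x0)
          moreover have "K * (-3 * R powr (4/3) * ((-1/3) * x powr (-1/3 - 1)) + (p * x powr (p - 1)) / p) = \<phi> x"
            unfolding \<phi>_def using pnz by simp
          ultimately show "(\<Phi> has_real_derivative \<phi> x) (at x)" by simp
        qed
        have Phicont: "continuous_on {T..r} \<Phi>"
          unfolding \<Phi>_def using Tpos pnz by (intro continuous_intros) auto
        have ybx: "\<bar>y x / x\<bar> \<le> \<phi> x" if "x \<in> {T..r}" for x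
        proof -
          have x0: "x > 0" using that Tpos by auto
          have "\<bar>y x\<bar> \<le> K * (R powr (4/3) * x powr (-1/3) + x powr p)" using yb' that TR by auto
          hence "\<bar>y x\<bar> / x \<le> K * (R powr (4/3) * x powr (-1/3) + x powr p) / x"
            using x0 by (intro divide_right_mono) auto
          also have "\<dots> = \<phi> x"
          proof -
            have h1: "x powr (-4/3) = x powr (-1/3) / x"
              using powr_diff[of x "-1/3" 1] x0 by simp
            have h2: "x powr (p-1) = x powr p / x"
              using powr_diff[of x p 1] x0 by simp
            show ?thesis unfolding \<phi>_def h1 h2 by (simp add: field_simps add_divide_distrib)
          qed
          finally show ?thesis using x0 by simp
        qed
        have c1: "F r - F T \<le> \<Phi> r - \<Phi> T"
          by (rule cmp[OF rT S(1) Fcont Fder Phider Phicont]) (use ybx abs_le_D1 in blast)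
        have c2: "(\<lambda>s. - F s) r - (\<lambda>s. - F s) T \<le> \<Phi> r - \<Phi> T"
        proof (rule cmp[OF rT S(1) _ _ Phider Phicont, where f' = "\<lambda>x. - (y x / x)"])
          show "continuous_on {T..r} (\<lambda>s. - F s)" using Fcont by (intro continuous_intros)
          show "\<forall>x\<in>{T<..<r} - S. ((\<lambda>s. - F s) has_real_derivative - (y x / x)) (at x)"
            using Fder by (auto intro: derivative_intros)
          show "\<forall>x\<in>{T..r}. - (y x / x) \<le> \<phi> x" using ybx abs_le_D2 by blast
        qed
        have D: "\<Phi> r - \<Phi> T \<le> K*(3*R powr \<epsilon>) + Q * r powr p + Q * R powr \<epsilon>"
        proof -
          have d1: "\<Phi> r - \<Phi> T = K * (3 * (R powr (4/3) * T powr (-1/3)) - 3 * (R powr (4/3) * r powr (-1/3))) + K * ((r powr p - T powr p) / p)"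
            unfolding \<Phi>_def by (simp add: algebra_simps diff_divide_distrib)
          have d2: "K * (3 * (R powr (4/3) * T powr (-1/3)) - 3 * (R powr (4/3) * r powr (-1/3))) \<le> K * (3 * R powr \<epsilon>)"
          proof -
            have "0 \<le> R powr (4/3) * r powr (-1/3)" by simp
            hence "3 * (R powr (4/3) * T powr (-1/3)) - 3 * (R powr (4/3) * r powr (-1/3)) \<le> 3 * R powr \<epsilon>"
              using TR43 Td by linarith
            thus ?thesis using Kpos by (intro mult_left_mono) auto
          qed
          have "(r powr p - T powr p) / p \<le> (r powr p + R powr \<epsilon>) / \<bar>p\<bar>"
          proof -
            have "(r powr p - T powr p) / p \<le> \<bar>r powr p - T powr p\<bar> / \<bar>p\<bar>"
              using abs_ge_self[of "(r powr p - T powr p)/p"] by (simp only: abs_divide)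
            also have "\<dots> \<le> (r powr p + R powr \<epsilon>) / \<bar>p\<bar>"
            proof (intro divide_right_mono)
              have "0 \<le> r powr p" "0 \<le> T powr p" by auto
              thus "\<bar>r powr p - T powr p\<bar> \<le> r powr p + R powr \<epsilon>" using Tp by linarith
            qed simp
            finally show ?thesis .
          qed
          hence "K * ((r powr p - T powr p) / p) \<le> K * ((r powr p + R powr \<epsilon>) / \<bar>p\<bar>)"
            using Kpos by (intro mult_left_mono) auto
          also have "K * ((r powr p + R powr \<epsilon>) / \<bar>p\<bar>) = Q * r powr p + Q * R powr \<epsilon>"
            unfolding Q_def by (simp add: field_simps add_divide_distrib)
          finally show ?thesis using d1 d2 by linarith
        qed
        have "E r - R * V = (F r - F T) + (E T - R * V) - y T + y r" unfolding F_def by simp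
        hence "\<bar>E r - R * V\<bar> \<le> (\<Phi> r - \<Phi> T) + 2*A*R powr \<epsilon> + 2*K*R powr \<epsilon> + K*(R powr \<epsilon> + r powr p)"
          using c1 c2 eT yT yr by auto
        hence "\<bar>E r - R * V\<bar> \<le> (2*A+7*K+Q) * (r powr p + R powr \<epsilon>)"
          by (intro finalarith[OF _ _ _ X0 Y0 _ D]) (use assms Kpos Qpos in auto)
        thus ?thesis unfolding p_def by simp
      qed
    qed
  qed
qed

end
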